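(* Let $(L,\le,\bot,\top)$ be a complete lattice and $(\&_i,\swarrow^i,\nwarrow_i)$, $i=1,\dots,n$, adjoint triples on $L$ with $x\,\&_i\,\top=\top\,\&_i\,x=x$ for all $x\in L$ and all $i$. Let $(A,B,R,\sigma)$ be a normalized context whose concept lattice $\mathcal{M}$ satisfies the ascending chain condition. Then the following are equivalent: (i) $(A,B,R,\sigma)$ has a decomposition into independent subcontexts; (ii) $\mathcal{M}$ has a decomposition into independent blocks.
   Context: An adjoint triple on $L$ is a triple of maps $\&,\swarrow,\nwarrow\colon L\times L\to L$ with $x\le z\swarrow y\iff x\& y\le z\iff y\le z\nwarrow x$. A context is $(A,B,R,\sigma)$ with $A,B$ non-empty, $R\colon A\times B\to L$, $\sigma\colon A\times B\to\{1,\dots,n\}$; normalized means every $a\in A$ has $b_1,b_2$ with $R(a,b_1)\ne\bot$, $R(a,b_2)=\bot$, and every $b\in B$ has $a_1,a_2$ with $R(a_1,b)\ne\bot$, $R(a_2,b)=\bot$. For $g\colon B\to L$, $f\colon A\to L$: $g^\uparrow(a)=\inf_{b}R(a,b)\swarrow^{\sigma(a,b)}g(b)$, $f^\downarrow(b)=\inf_{a}R(a,b)\nwarrow_{\sigma(a,b)}f(a)$. $\mathcal{M}$ is the complete lattice of pairs $\langle g,f\rangle$ with $g^\uparrow=f$, $f^\downarrow=g$, ordered by $g_1\le g_2$ pointwise. For a bounded lattice $(M,\preceq,\bot,\top)$, a block is a sublattice $K\subsetneq M$ with $K\setminus\{\bot,\top\}\ne\varnothing$ and $(\{x\mid k\preceq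 x\}\cup\{x\mid x\preceq k\})\setminus\{\bot,\top\}\subseteq K$ for all $k\in K\setminus\{\bot,\top\}$; blocks $K_1,K_2$ are independent if $K_1\cap K_2\subseteq\{\bot,\top\}$; a decomposition into independent blocks is a family of pairwise independent blocks whose union is $M$. A separable subcontext is a tuple $(Y,X,R_{Y\times X},\sigma_{Y\times X})$ (restrictions of $R,\sigma$) with $Y\subsetneq A$, $X\subsetneq B$ non-empty, $R(a,b)\neq\bot$ for some $a\in Y,b\in X$, $R=\bot$ on $Y\times(B\setminus X)$ and on $(A\setminus Y)\times X$. $\&$ has zero-divisors if $x\&y=\bot$ for some $x,y\neq\bot$. A decomposition into independent subcontexts is a family $\{(A_\lambda,B_\lambda,R_\lambda,\sigma_\lambda)\}_{\lambda\in\Lambda}$, $\Lambda\ne\varnothing$, $R_\lambda,\sigma_\lambda$ restrictions to $A_\lambda\times B_\lambda$, such that each tuple is a separable subcontext, the $A_\lambda$ are pairwise disjoint with union $A$, the $B_\lambda$ are pairwise disjoint with union $B$, and for each $\lambda$ the conjunctor $\&_{\sigma(a,b)}$ has no zero-divisors for all $(a,b)\in((A\setminus A_\lambda)\times B_\lambda)\cup(A_\lambda\times(B\setminus B_\lambda))$. *)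

theory Defs
  imports Main
begin

definition adjoint_triple ::
  "('l::complete_lattice \<Rightarrow> 'l \<Rightarrow> 'l) \<Rightarrow> ('l \<Rightarrow> 'l \<Rightarrow> 'l) \<Rightarrow> ('l \<Rightarrow> 'l \<Rightarrow> 'l) \<Rightarrow> bool" where
  "adjoint_triple cj ld rd \<longleftrightarrow>
     (\<forall>x y z. (x \<le> ld z y \<longleftrightarrow> cj x y \<le> z) \<and> (cj x y \<le> z \<longleftrightarrow> y \<le> rd z x))"

definition has_zero_divisors :: "('l::complete_lattice \<Rightarrow> 'l \<Rightarrow> 'l) \<Rightarrow> bool" where
  "has_zero_divisors cj \<longleftrightarrow> (\<exists>x y. x \<noteq> bot \<and> y \<noteq> bot \<and> cj x y = bot)"

definition normalized_context ::
  "'a set \<Rightarrow> 'b set \<Rightarrow> ('a \<Rightarrow> 'b \<Rightarrow> 'l::complete_lattice) \<Rightarrow> bool" where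
  "normalized_context A B R \<longleftrightarrow>
     (\<forall>a\<in>A. (\<exists>b1\<in>B. R a b1 \<noteq> bot) \<and> (\<exists>b2\<in>B. R a b2 = bot)) \<and>
     (\<forall>b\<in>B. (\<exists>a1\<in>A. R a1 b \<noteq> bot) \<and> (\<exists>a2\<in>A. R a2 b = bot))"

text \<open>Derivation operators; ld i = the i-th left residuum (swarrow^i), rd i = nwarrow_i.\<close>

definition up_op ::
  "'a set \<Rightarrow> 'b set \<Rightarrow> ('a \<Rightarrow> 'b \<Rightarrow> 'l::complete_lattice) \<Rightarrow> ('a \<Rightarrow> 'b \<Rightarrow> nat)
    \<Rightarrow> (nat \<Rightarrow> 'l \<Rightarrow> 'l \<Rightarrow> 'l) \<Rightarrow> ('b \<Rightarrow> 'l) \<Rightarrow> 'a \<Rightarrow> 'l" where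
  "up_op A B R \<sigma> ld g a = (INF b\<in>B. ld (\<sigma> a b) (R a b) (g b))"

definition down_op ::
  "'a set \<Rightarrow> 'b set \<Rightarrow> ('a \<Rightarrow> 'b \<Rightarrow> 'l::complete_lattice) \<Rightarrow> ('a \<Rightarrow> 'b \<Rightarrow> nat)
    \<Rightarrow> (nat \<Rightarrow> 'l \<Rightarrow> 'l \<Rightarrow> 'l) \<Rightarrow> ('a \<Rightarrow> 'l) \<Rightarrow> 'b \<Rightarrow> 'l" where
  "down_op A B R \<sigma> rd f b = (INF a\<in>A. rd (\<sigma> a b) (R a b) (f a))"

text \<open>The concept lattice: pairs (g,f) of L-fuzzy subsets g of B and f of A
  (represented as functions that are undefined outside B resp. A) with
  g-up = f and f-down = g.\<close>

definition concepts ::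
  "'a set \<Rightarrow> 'b set \<Rightarrow> ('a \<Rightarrow> 'b \<Rightarrow> 'l::complete_lattice) \<Rightarrow> ('a \<Rightarrow> 'b \<Rightarrow> nat)
    \<Rightarrow> (nat \<Rightarrow> 'l \<Rightarrow> 'l \<Rightarrow> 'l) \<Rightarrow> (nat \<Rightarrow> 'l \<Rightarrow> 'l \<Rightarrow> 'l) \<Rightarrow> (('b \<Rightarrow> 'l) \<times> ('a \<Rightarrow> 'l)) set" where
  "concepts A B R \<sigma> ld rd =
     {(g, f). (\<forall>b. b \<notin> B \<longrightarrow> g b = undefined) \<and> (\<forall>a. a \<notin> A \<longrightarrow> f a = undefined) \<and>
              (\<forall>a\<in>A. f a = up_op A B R \<sigma> ld g a) \<and>
              (\<forall>b\<in>B. g b = down_op A B R \<sigma> rd f b)}"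

definition concept_le ::
  "'b set \<Rightarrow> (('b \<Rightarrow> 'l::complete_lattice) \<times> ('a \<Rightarrow> 'l)) \<Rightarrow> (('b \<Rightarrow> 'l) \<times> ('a \<Rightarrow> 'l)) \<Rightarrow> bool" where
  "concept_le B c1 c2 \<longleftrightarrow> (\<forall>b\<in>B. fst c1 b \<le> fst c2 b)"

definition acc_condition :: "'m set \<Rightarrow> ('m \<Rightarrow> 'm \<Rightarrow> bool) \<Rightarrow> bool" where
  "acc_condition M le \<longleftrightarrow>
     (\<forall>c::nat \<Rightarrow> 'm. (\<forall>i. c i \<in> M) \<and> (\<forall>i. le (c i) (c (Suc i))) \<longrightarrow> (\<exists>N. \<forall>m\<ge>N. c m = c N))"

definition is_least :: "'m set \<Rightarrow> ('m \<Rightarrow> 'm \<Rightarrow> bool) \<Rightarrow> 'm \<Rightarrow> bool" where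
  "is_least M le x \<longleftrightarrow> x \<in> M \<and> (\<forall>y\<in>M. le x y)"

definition is_greatest :: "'m set \<Rightarrow> ('m \<Rightarrow> 'm \<Rightarrow> bool) \<Rightarrow> 'm \<Rightarrow> bool" where
  "is_greatest M le x \<longleftrightarrow> x \<in> M \<and> (\<forall>y\<in>M. le y x)"

definition inner :: "'m set \<Rightarrow> ('m \<Rightarrow> 'm \<Rightarrow> bool) \<Rightarrow> 'm set \<Rightarrow> 'm set" where
  "inner M le K = {k\<in>K. \<not> is_least M le k \<and> \<not> is_greatest M le k}"

definition is_join_in :: "'m set \<Rightarrow> ('m \<Rightarrow> 'm \<Rightarrow> bool) \<Rightarrow> 'm \<Rightarrow> 'm \<Rightarrow> 'm \<Rightarrow> bool" where
  "is_join_in M le x y s \<longleftrightarrow> s \<in> M \<and> le x s \<and> le y s \<and> (\<forall>u\<in>M. le x u \<and> le y u \<longrightarrow> le s u)"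

definition is_meet_in :: "'m set \<Rightarrow> ('m \<Rightarrow> 'm \<Rightarrow> bool) \<Rightarrow> 'm \<Rightarrow> 'm \<Rightarrow> 'm \<Rightarrow> bool" where
  "is_meet_in M le x y s \<longleftrightarrow> s \<in> M \<and> le s x \<and> le s y \<and> (\<forall>u\<in>M. le u x \<and> le u y \<longrightarrow> le u s)"

definition sublattice_of :: "'m set \<Rightarrow> ('m \<Rightarrow> 'm \<Rightarrow> bool) \<Rightarrow> 'm set \<Rightarrow> bool" where
  "sublattice_of M le K \<longleftrightarrow> K \<subseteq> M \<and> K \<noteq> {} \<and>
     (\<forall>x\<in>K. \<forall>y\<in>K. \<forall>s. is_join_in M le x y s \<longrightarrow> s \<in> K) \<and>
     (\<forall>x\<in>K. \<forall>y\<in>K. \<forall>s. is_meet_in M le x y s \<longrightarrow> s \<in> K)"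

definition is_block :: "'m set \<Rightarrow> ('m \<Rightarrow> 'm \<Rightarrow> bool) \<Rightarrow> 'm set \<Rightarrow> bool" where
  "is_block M le K \<longleftrightarrow> sublattice_of M le K \<and> K \<subset> M \<and> inner M le K \<noteq> {} \<and>
     (\<forall>k\<in>inner M le K. inner M le ({x\<in>M. le k x} \<union> {x\<in>M. le x k}) \<subseteq> K)"

definition independent_blocks :: "'m set \<Rightarrow> ('m \<Rightarrow> 'm \<Rightarrow> bool) \<Rightarrow> 'm set \<Rightarrow> 'm set \<Rightarrow> bool" where
  "independent_blocks M le K1 K2 \<longleftrightarrow> inner M le (K1 \<inter> K2) = {}"

definition has_block_decomposition :: "'m set \<Rightarrow> ('m \<Rightarrow> 'm \<Rightarrow> bool) \<Rightarrow> bool" where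
  "has_block_decomposition M le \<longleftrightarrow>
     (\<exists>\<K>. (\<forall>K\<in>\<K>. is_block M le K) \<and>
          (\<forall>K1\<in>\<K>. \<forall>K2\<in>\<K>. K1 \<noteq> K2 \<longrightarrow> independent_blocks M le K1 K2) \<and>
          \<Union>\<K> = M)"

definition separable_subcontext ::
  "'a set \<Rightarrow> 'b set \<Rightarrow> ('a \<Rightarrow> 'b \<Rightarrow> 'l::complete_lattice) \<Rightarrow> 'a set \<Rightarrow> 'b set \<Rightarrow> bool" where
  "separable_subcontext A B R Y X \<longleftrightarrow>
     Y \<subset> A \<and> X \<subset> B \<and> Y \<noteq> {} \<and> X \<noteq> {} \<and>
     (\<exists>a\<in>Y. \<exists>b\<in>X. R a b \<noteq> bot) \<and>
     (\<forall>a\<in>Y. \<forall>b\<in>B - X. R a b = bot) \<and>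
     (\<forall>a\<in>A - Y. \<forall>b\<in>X. R a b = bot)"

text \<open>A family of subcontexts is represented by the set of its pairs (A_lambda, B_lambda);
  since all A_lambda are non-empty and pairwise disjoint, the index is irrelevant.\<close>
definition has_subcontext_decomposition ::
  "'a set \<Rightarrow> 'b set \<Rightarrow> ('a \<Rightarrow> 'b \<Rightarrow> 'l::complete_lattice) \<Rightarrow> ('a \<Rightarrow> 'b \<Rightarrow> nat)
    \<Rightarrow> (nat \<Rightarrow> 'l \<Rightarrow> 'l \<Rightarrow> 'l) \<Rightarrow> bool" where
  "has_subcontext_decomposition A B R \<sigma> cj \<longleftrightarrow>
     (\<exists>\<P> :: ('a set \<times> 'b set) set. \<P> \<noteq> {} \<and>
        (\<forall>(Y, X)\<in>\<P>. separable_subcontext A B R Y X) \<and>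
        (\<forall>p\<in>\<P>. \<forall>q\<in>\<P>. p \<noteq> q \<longrightarrow> fst p \<inter> fst q = {} \<and> snd p \<inter> snd q = {}) \<and>
        (\<Union>p\<in>\<P>. fst p) = A \<and> (\<Union>p\<in>\<P>. snd p) = B \<and>
        (\<forall>(Y, X)\<in>\<P>. \<forall>(a, b) \<in> ((A - Y) \<times> X) \<union> (Y \<times> (B - X)).
            \<not> has_zero_divisors (cj (\<sigma> a b))))"

end

theory Submission
  imports Defs
begin

definition pt :: "'l::complete_lattice \<Rightarrow> 'x \<Rightarrow> 'x \<Rightarrow> 'l" where
  "pt v x0 = (\<lambda>x. if x = x0 then v else bot)"

locale ctx =
  fixes n :: nat
    and cj ld rd :: "nat \<Rightarrow> 'l::complete_lattice \<Rightarrow> 'l \<Rightarrow> 'l"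
    and A :: "'a set" and B :: "'b set"
    and R :: "'a \<Rightarrow> 'b \<Rightarrow> 'l" and \<sigma> :: "'a \<Rightarrow> 'b \<Rightarrow> nat"
  assumes triples: "\<forall>i\<in>{1..n}. adjoint_triple (cj i) (ld i) (rd i)"
    and units: "\<forall>i\<in>{1..n}. \<forall>x. cj i x top = x \<and> cj i top x = x"
    and A_ne: "A \<noteq> {}" and B_ne: "B \<noteq> {}"
    and sigma_range: "\<forall>a\<in>A. \<forall>b\<in>B. \<sigma> a b \<in> {1..n}"
    and normalized: "normalized_context A B R"
begin

abbreviation "M \<equiv> concepts A B R \<sigma> ld rd"
abbreviation cle :: "('b \<Rightarrow> 'l) \<times> ('a \<Rightarrow> 'l) \<Rightarrow> ('b \<Rightarrow> 'l) \<times> ('a \<Rightarrow> 'l) \<Rightarrow> bool"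
  where "cle \<equiv> concept_le B"

lemma sig: "a \<in> A \<Longrightarrow> b \<in> B \<Longrightarrow> \<sigma> a b \<in> {1..n}"
  using sigma_range by blast

lemma adjL: "i \<in> {1..n} \<Longrightarrow> x \<le> ld i z y \<longleftrightarrow> cj i x y \<le> z"
  using triples unfolding adjoint_triple_def by blast

lemma adjR: "i \<in> {1..n} \<Longrightarrow> cj i x y \<le> z \<longleftrightarrow> y \<le> rd i z x"
  using triples unfolding adjoint_triple_def by blast

lemma unit1: "i \<in> {1..n} \<Longrightarrow> cj i x top = x" using units by blast
lemma unit2: "i \<in> {1..n} \<Longrightarrow> cj i top x = x" using units by blast

lemma cj_bot1: assumes "i \<in> {1..n}" shows "cj i bot y = bot"
proof -
  have "bot \<le> ld i bot y" by simp
  hence "cj i bot y \<le> bot" using adjL[OF assms] by blast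
  thus ?thesis by (simp add: bot_unique)
qed

lemma cj_bot2: assumes "i \<in> {1..n}" shows "cj i x bot = bot"
proof -
  have "bot \<le> rd i bot x" by simp
  hence "cj i x bot \<le> bot" using adjR[OF assms] by blast
  thus ?thesis by (simp add: bot_unique)
qed

lemma cj_mono: assumes i: "i \<in> {1..n}" and xx: "x \<le> x'" and yy: "y \<le> y'"
  shows "cj i x y \<le> cj i x' y'"
proof -
  have "y' \<le> rd i (cj i x y') x" using adjR[OF i] by blast
  hence "y \<le> rd i (cj i x y') x" using yy by (rule order_trans[rotated])
  hence 1: "cj i x y \<le> cj i x y'" using adjR[OF i] by blast
  have "x' \<le> ld i (cj i x' y') y'" using adjL[OF i] by blast
  hence "x \<le> ld i (cj i x' y') y'" using xx by (rule order_trans[rotated])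
  hence "cj i x y' \<le> cj i x' y'" using adjL[OF i] by blast
  with 1 show ?thesis by (rule order_trans)
qed

lemma rd_top: assumes i: "i \<in> {1..n}" shows "rd i z top \<le> z"
proof -
  have "cj i top (rd i z top) \<le> z" using adjR[OF i] by blast
  thus ?thesis using unit2[OF i] by simp
qed

lemma ld_top: assumes i: "i \<in> {1..n}" shows "ld i z top \<le> z"
proof -
  have "cj i (ld i z top) top \<le> z" using adjL[OF i] by blast
  thus ?thesis using unit1[OF i] by simp
qed

lemma top_ne_bot: "(top::'l) \<noteq> bot"
proof
  assume tb: "(top::'l) = bot"
  obtain a where "a \<in> A" using A_ne by blast
  then obtain b where "R a b \<noteq> bot" using normalized unfolding normalized_context_def by blast
  moreover have "R a b \<le> top" by simp
  ultimately show False using tb by (simp add: bot_unique)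
qed

lemma cjb1[simp]: "a \<in> A \<Longrightarrow> b \<in> B \<Longrightarrow> cj (\<sigma> a b) bot y = bot"
  using cj_bot1 sig by blast
lemma cjb2[simp]: "a \<in> A \<Longrightarrow> b \<in> B \<Longrightarrow> cj (\<sigma> a b) x bot = bot"
  using cj_bot2 sig by blast
lemma cju1[simp]: "a \<in> A \<Longrightarrow> b \<in> B \<Longrightarrow> cj (\<sigma> a b) x top = x"
  using unit1 sig by blast
lemma cju2[simp]: "a \<in> A \<Longrightarrow> b \<in> B \<Longrightarrow> cj (\<sigma> a b) top x = x"
  using unit2 sig by blast

definition rel :: "('a \<Rightarrow> 'l) \<Rightarrow> ('b \<Rightarrow> 'l) \<Rightarrow> bool" where
  "rel f g \<longleftrightarrow> (\<forall>a\<in>A. \<forall>b\<in>B. cj (\<sigma> a b) (f a) (g b) \<le> R a b)"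

definition upF :: "('b \<Rightarrow> 'l) \<Rightarrow> 'a \<Rightarrow> 'l" where
  "upF g = (\<lambda>a. if a \<in> A then up_op A B R \<sigma> ld g a else undefined)"

definition downF :: "('a \<Rightarrow> 'l) \<Rightarrow> 'b \<Rightarrow> 'l" where
  "downF f = (\<lambda>b. if b \<in> B then down_op A B R \<sigma> rd f b else undefined)"

lemma L1: "(\<forall>b\<in>B. g b \<le> down_op A B R \<sigma> rd f b) \<longleftrightarrow> rel f g"
  unfolding down_op_def rel_def le_INF_iff using adjR sig by blast

lemma L2: "(\<forall>a\<in>A. f a \<le> up_op A B R \<sigma> ld g a) \<longleftrightarrow> rel f g"
  unfolding up_op_def rel_def le_INF_iff using adjL sig by blast

lemma L1': "(\<forall>b\<in>B. g b \<le> downF f b) \<longleftrightarrow> rel f g"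
  using L1 by (simp add: downF_def)

lemma L2': "(\<forall>a\<in>A. f a \<le> upF g a) \<longleftrightarrow> rel f g"
  using L2 by (simp add: upF_def)

lemma M_char: "c \<in> M \<longleftrightarrow> fst c = downF (snd c) \<and> snd c = upF (fst c)"
  by (cases c) (auto simp: concepts_def upF_def downF_def fun_eq_iff)

lemma rel_mono: "rel f g \<Longrightarrow> \<forall>a\<in>A. f' a \<le> f a \<Longrightarrow> \<forall>b\<in>B. g' b \<le> g b \<Longrightarrow> rel f' g'"
  unfolding rel_def by (meson cj_mono order_trans sig)

lemma M_rel: assumes "c \<in> M" shows "rel (snd c) (fst c)"
proof -
  have "snd c = upF (fst c)" using assms M_char by blast
  thus ?thesis using L2' by auto
qed

lemma le_iff: assumes c1: "c1 \<in> M" and c2: "c2 \<in> M"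
  shows "cle c1 c2 \<longleftrightarrow> (\<forall>a\<in>A. snd c2 a \<le> snd c1 a)"
proof
  assume le: "cle c1 c2"
  have "rel (snd c2) (fst c1)"
    using rel_mono[OF M_rel[OF c2]] le unfolding concept_le_def by auto
  hence "\<forall>a\<in>A. snd c2 a \<le> upF (fst c1) a" using L2' by blast
  moreover have "snd c1 = upF (fst c1)" using c1 M_char by blast
  ultimately show "\<forall>a\<in>A. snd c2 a \<le> snd c1 a" by simp
next
  assume le: "\<forall>a\<in>A. snd c2 a \<le> snd c1 a"
  have "rel (snd c2) (fst c1)"
    using rel_mono[OF M_rel[OF c1]] le by auto
  hence "\<forall>b\<in>B. fst c1 b \<le> downF (snd c2) b" using L1' by blast
  moreover have "fst c2 = downF (snd c2)" using c2 M_char by blast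
  ultimately show "cle c1 c2" unfolding concept_le_def by simp
qed

lemma extB: "\<forall>b\<in>B. g0 b \<le> downF (upF g0) b"
proof -
  have "rel (upF g0) g0" using L2' by blast
  thus ?thesis using L1' by blast
qed

lemma extA: "\<forall>a\<in>A. f0 a \<le> upF (downF f0) a"
proof -
  have "rel f0 (downF f0)" using L1' by blast
  thus ?thesis using L2' by blast
qed

lemma clB_in: "(downF (upF g0), upF g0) \<in> M"
proof -
  define f where "f = upF g0"
  define g where "g = downF f"
  have g0g: "\<forall>b\<in>B. g0 b \<le> g b" using extB unfolding f_def g_def by blast
  have "rel (upF g) g" using L2' by blast
  hence "rel (upF g) g0" using rel_mono g0g by blast
  hence le1: "\<forall>a\<in>A. upF g a \<le> f a" using L2' unfolding f_def by blast
  have le2: "\<forall>a\<in>A. f a \<le> upF g a" using extA unfolding g_def by blast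
  have "upF g = f"
  proof
    fix a show "upF g a = f a"
      using le1 le2 by (cases "a \<in> A") (auto simp: f_def upF_def intro: antisym)
  qed
  thus ?thesis unfolding M_char by (simp add: f_def g_def)
qed

lemma clA_in: "(downF f0, upF (downF f0)) \<in> M"
proof -
  define g where "g = downF f0"
  define f where "f = upF g"
  have f0f: "\<forall>a\<in>A. f0 a \<le> f a" using extA unfolding f_def g_def by blast
  have "rel f (downF f)" using L1' by blast
  hence "rel f0 (downF f)" using rel_mono f0f by blast
  hence le1: "\<forall>b\<in>B. downF f b \<le> g b" using L1' unfolding g_def by blast
  have le2: "\<forall>b\<in>B. g b \<le> downF f b" using extB unfolding f_def by blast
  have "downF f = g"
  proof
    fix b show "downF f b = g b"
      using le1 le2 by (cases "b \<in> B") (auto simp: g_def downF_def intro: antisym)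
  qed
  thus ?thesis unfolding M_char by (simp add: f_def g_def)
qed


lemma least_iff: assumes c: "c \<in> M" shows "is_least M cle c \<longleftrightarrow> (\<forall>b\<in>B. fst c b = bot)"
proof
  assume l: "is_least M cle c"
  define d where "d = (downF (\<lambda>a. top), upF (downF (\<lambda>a. top)))"
  have d: "d \<in> M" unfolding d_def by (rule clA_in)
  have cd: "cle c d" using l d unfolding is_least_def by blast
  show "\<forall>b\<in>B. fst c b = bot"
  proof
    fix b assume b: "b \<in> B"
    obtain a where a: "a \<in> A" and Rab: "R a b = bot"
      using normalized b unfolding normalized_context_def by blast
    have "fst c b \<le> fst d b" using cd b unfolding concept_le_def by auto
    also have "\<dots> = down_op A B R \<sigma> rd (\<lambda>a. top) b" by (simp add: d_def downF_def b)
    also have "\<dots> \<le> rd (\<sigma> a b) (R a b) top" unfolding down_op_def using a by (rule INF_lower)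
    also have "\<dots> \<le> R a b" by (rule rd_top[OF sig[OF a b]])
    finally show "fst c b = bot" using Rab by (simp add: bot_unique)
  qed
next
  assume "\<forall>b\<in>B. fst c b = bot"
  thus "is_least M cle c" using c unfolding is_least_def concept_le_def by simp
qed

lemma greatest_iff: assumes c: "c \<in> M" shows "is_greatest M cle c \<longleftrightarrow> (\<forall>a\<in>A. snd c a = bot)"
proof
  assume l: "is_greatest M cle c"
  define d where "d = (downF (upF (\<lambda>b. top)), upF (\<lambda>b. top))"
  have d: "d \<in> M" unfolding d_def by (rule clB_in)
  have cd: "cle d c" using l d unfolding is_greatest_def by blast
  hence cd': "\<forall>a\<in>A. snd c a \<le> snd d a" using le_iff[OF d c] by blast
  show "\<forall>a\<in>A. snd c a = bot"
  proof
    fix a assume a: "a \<in> A"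
    obtain b where b: "b \<in> B" and Rab: "R a b = bot"
      using normalized a unfolding normalized_context_def by blast
    have "snd c a \<le> snd d a" using cd' a by auto
    also have "\<dots> = up_op A B R \<sigma> ld (\<lambda>b. top) a" by (simp add: d_def upF_def a)
    also have "\<dots> \<le> ld (\<sigma> a b) (R a b) top" unfolding up_op_def using b by (rule INF_lower)
    also have "\<dots> \<le> R a b" by (rule ld_top[OF sig[OF a b]])
    finally show "snd c a = bot" using Rab by (simp add: bot_unique)
  qed
next
  assume h: "\<forall>a\<in>A. snd c a = bot"
  show "is_greatest M cle c" unfolding is_greatest_def
    using c h le_iff[OF _ c] by simp
qed

definition inn where
  "inn c \<longleftrightarrow> c \<in> M \<and> (\<exists>b\<in>B. fst c b \<noteq> bot) \<and> (\<exists>a\<in>A. snd c a \<noteq> bot)"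

lemma inner_iff: "K \<subseteq> M \<Longrightarrow> c \<in> inner M cle K \<longleftrightarrow> c \<in> K \<and> inn c"
  unfolding inner_def inn_def using least_iff greatest_iff by blast

definition gam :: "'l \<Rightarrow> 'a \<Rightarrow> ('b \<Rightarrow> 'l) \<times> ('a \<Rightarrow> 'l)" where
  "gam x a = (downF (pt x a), upF (downF (pt x a)))"

definition mu :: "'l \<Rightarrow> 'b \<Rightarrow> ('b \<Rightarrow> 'l) \<times> ('a \<Rightarrow> 'l)" where
  "mu y b = (downF (upF (pt y b)), upF (pt y b))"

lemma gam_in: "gam x a \<in> M" unfolding gam_def by (rule clA_in)
lemma mu_in: "mu y b \<in> M" unfolding mu_def by (rule clB_in)

lemma gam_fst: assumes a: "a \<in> A" and b: "b \<in> B" and h: "cj (\<sigma> a b) x y \<le> R a b"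
  shows "y \<le> fst (gam x a) b"
proof -
  have "rel (pt x a) (pt y b)" unfolding rel_def
  proof (intro ballI)
    fix a' b' assume a': "a' \<in> A" and b': "b' \<in> B"
    show "cj (\<sigma> a' b') (pt x a a') (pt y b b') \<le> R a' b'"
    proof (cases "a' = a \<and> b' = b")
      case True
      hence e1: "a' = a" and e2: "b' = b" by auto
      have p1: "pt x a a' = x" and p2: "pt y b b' = y" using e1 e2 unfolding pt_def by auto
      show ?thesis unfolding p1 p2 using h e1 e2 by blast
    next
      case False
      hence "pt x a a' = bot \<or> pt y b b' = bot" by (auto simp: pt_def)
      thus ?thesis
      proof
        assume "pt x a a' = bot" thus ?thesis using cjb1[OF a' b'] by simp
      next
        assume "pt y b b' = bot" thus ?thesis using cjb2[OF a' b'] by simp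
      qed
    qed
  qed
  hence "\<forall>b'\<in>B. pt y b b' \<le> downF (pt x a) b'" using L1'[of "pt y b" "pt x a"] by blast
  hence "pt y b b \<le> downF (pt x a) b" using b by blast
  thus ?thesis by (simp add: gam_def pt_def)
qed

lemma mu_snd: assumes a: "a \<in> A" and b: "b \<in> B" and h: "cj (\<sigma> a b) x y \<le> R a b"
  shows "x \<le> snd (mu y b) a"
proof -
  have "rel (pt x a) (pt y b)" unfolding rel_def
  proof (intro ballI)
    fix a' b' assume a': "a' \<in> A" and b': "b' \<in> B"
    show "cj (\<sigma> a' b') (pt x a a') (pt y b b') \<le> R a' b'"
    proof (cases "a' = a \<and> b' = b")
      case True
      hence e1: "a' = a" and e2: "b' = b" by auto
      have p1: "pt x a a' = x" and p2: "pt y b b' = y" using e1 e2 unfolding pt_def by auto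
      show ?thesis unfolding p1 p2 using h e1 e2 by blast
    next
      case False
      hence "pt x a a' = bot \<or> pt y b b' = bot" by (auto simp: pt_def)
      thus ?thesis
      proof
        assume "pt x a a' = bot" thus ?thesis using cjb1[OF a' b'] by simp
      next
        assume "pt y b b' = bot" thus ?thesis using cjb2[OF a' b'] by simp
      qed
    qed
  qed
  hence "\<forall>a'\<in>A. pt x a a' \<le> upF (pt y b) a'" using L2'[of "pt x a" "pt y b"] by blast
  hence "pt x a a \<le> upF (pt y b) a" using a by blast
  thus ?thesis by (simp add: mu_def pt_def)
qed

lemma gam_snd: "a \<in> A \<Longrightarrow> x \<le> snd (gam x a) a"
  using extA[of "pt x a"] by (auto simp: gam_def pt_def)

lemma mu_fst: "b \<in> B \<Longrightarrow> y \<le> fst (mu y b) b"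
  using extB[of "pt y b"] by (auto simp: mu_def pt_def)

lemma le_gam: assumes c: "c \<in> M" and a: "a \<in> A" and x: "x \<le> snd c a"
  shows "cle c (gam x a)"
proof -
  have "rel (pt x a) (fst c)"
    using rel_mono[OF M_rel[OF c]] x by (auto simp: pt_def)
  hence "\<forall>b\<in>B. fst c b \<le> downF (pt x a) b" using L1' by blast
  thus ?thesis unfolding concept_le_def gam_def by simp
qed

lemma mu_le: assumes c: "c \<in> M" and b: "b \<in> B" and y: "y \<le> fst c b"
  shows "cle (mu y b) c"
proof -
  have "rel (snd c) (pt y b)"
    using rel_mono[OF M_rel[OF c]] y by (auto simp: pt_def)
  hence "\<forall>a\<in>A. snd c a \<le> upF (pt y b) a" using L2' by blast
  thus ?thesis using le_iff[OF mu_in c] unfolding mu_def by simp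
qed

lemma gam_top_snd: "a \<in> A \<Longrightarrow> snd (gam top a) a = top"
  using gam_snd[of a top] by (simp add: top_unique)

lemma mu_top_fst: "b \<in> B \<Longrightarrow> fst (mu top b) b = top"
  using mu_fst[of b top] by (simp add: top_unique)

lemma gam_top_fst: "a \<in> A \<Longrightarrow> b \<in> B \<Longrightarrow> R a b \<le> fst (gam top a) b"
  by (rule gam_fst) (auto simp: unit2 sig)

lemma mu_top_snd: "a \<in> A \<Longrightarrow> b \<in> B \<Longrightarrow> R a b \<le> snd (mu top b) a"
  by (rule mu_snd) (auto simp: unit1 sig)

lemma inn_gam: assumes a: "a \<in> A" shows "inn (gam top a)"
proof -
  obtain b where b: "b \<in> B" and "R a b \<noteq> bot" using normalized a unfolding normalized_context_def by blast
  hence "fst (gam top a) b \<noteq> bot" using gam_top_fst[OF a b] by (auto simp: bot_unique)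
  moreover have "snd (gam top a) a \<noteq> bot" using gam_top_snd[OF a] top_ne_bot by simp
  ultimately show ?thesis unfolding inn_def using gam_in b a by blast
qed

lemma inn_mu: assumes b: "b \<in> B" shows "inn (mu top b)"
proof -
  obtain a where a: "a \<in> A" and "R a b \<noteq> bot" using normalized b unfolding normalized_context_def by blast
  hence "snd (mu top b) a \<noteq> bot" using mu_top_snd[OF a b] by (auto simp: bot_unique)
  moreover have "fst (mu top b) b \<noteq> bot" using mu_top_fst[OF b] top_ne_bot by simp
  ultimately show ?thesis unfolding inn_def using mu_in b a by blast
qed


lemma inn_in: "inn c \<Longrightarrow> c \<in> M" unfolding inn_def by blast

section \<open>From block decomposition to subcontext decomposition\<close>

lemma dir2:
  assumes "has_block_decomposition M cle"
  shows "has_subcontext_decomposition A B R \<sigma> cj"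
proof -
  obtain KS where blk: "\<forall>K\<in>KS. is_block M cle K"
    and ind: "\<forall>K1\<in>KS. \<forall>K2\<in>KS. K1 \<noteq> K2 \<longrightarrow> independent_blocks M cle K1 K2"
    and un: "\<Union>KS = M"
    using assms unfolding has_block_decomposition_def by blast
  have KM: "K \<subseteq> M" if "K \<in> KS" for K
    using blk that unfolding is_block_def sublattice_of_def by blast
  have same: "d \<in> K" if K: "K \<in> KS" and cK: "c \<in> K" and ic: "inn c" and id: "inn d"
    and cmp: "cle c d \<or> cle d c" for K c d
  proof -
    have ci: "c \<in> inner M cle K" using inner_iff[OF KM[OF K]] cK ic by blast
    have "\<forall>k\<in>inner M cle K. inner M cle ({x\<in>M. cle k x} \<union> {x\<in>M. cle x k}) \<subseteq> K"
      using blk K unfolding is_block_def by blast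
    hence sub: "inner M cle ({x\<in>M. cle c x} \<union> {x\<in>M. cle x c}) \<subseteq> K" using ci by blast
    have "d \<in> inner M cle ({x\<in>M. cle c x} \<union> {x\<in>M. cle x c})"
      by (subst inner_iff) (use cmp id inn_in in auto)
    thus ?thesis using sub by blast
  qed
  have uniq: "K1 = K2" if "K1 \<in> KS" "K2 \<in> KS" "c \<in> K1" "c \<in> K2" "inn c" for K1 K2 c
  proof (rule ccontr)
    assume "K1 \<noteq> K2"
    hence "inner M cle (K1 \<inter> K2) = {}" using ind that unfolding independent_blocks_def by blast
    moreover have "c \<in> inner M cle (K1 \<inter> K2)"
      using inner_iff[of "K1 \<inter> K2" c] KM that by blast
    ultimately show False by blast
  qed
  have exK: "\<exists>K\<in>KS. c \<in> K" if "inn c" for c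
    using un inn_in[OF that] by blast
  have link: "gam top a \<in> K \<longleftrightarrow> mu top b \<in> K"
    if K: "K \<in> KS" and a: "a \<in> A" and b: "b \<in> B" and x: "x \<noteq> bot" and y: "y \<noteq> bot"
      and h: "cj (\<sigma> a b) x y \<le> R a b" for K a b x y
  proof -
    define m where "m = mu y b"
    define k where "k = gam x a"
    have m_in: "m \<in> M" unfolding m_def by (rule mu_in)
    have k_in: "k \<in> M" unfolding k_def by (rule gam_in)
    have mb: "y \<le> fst m b" unfolding m_def by (rule mu_fst[OF b])
    have ma: "x \<le> snd m a" unfolding m_def by (rule mu_snd[OF a b h])
    have ka: "x \<le> snd k a" unfolding k_def by (rule gam_snd[OF a])
    have "fst m b \<noteq> bot" using mb y by (auto simp: bot_unique)
    moreover have "snd m a \<noteq> bot" using ma x by (auto simp: bot_unique)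
    ultimately have im: "inn m" unfolding inn_def using m_in a b by blast
    have mk: "cle m k" unfolding k_def by (rule le_gam[OF m_in a ma])
    have "y \<le> fst k b" using mb mk b unfolding concept_le_def by (blast intro: order_trans)
    hence "fst k b \<noteq> bot" using y by (auto simp: bot_unique)
    moreover have "snd k a \<noteq> bot" using ka x by (auto simp: bot_unique)
    ultimately have ik: "inn k" unfolding inn_def using k_in a b by blast
    have m1: "cle m (mu top b)" unfolding m_def
      by (rule mu_le[OF mu_in b]) (simp add: mu_top_fst[OF b])
    have k1: "cle (gam top a) k" unfolding k_def
      by (rule le_gam[OF gam_in a]) (simp add: gam_top_snd[OF a])
    have ig: "inn (gam top a)" by (rule inn_gam[OF a])
    have imu: "inn (mu top b)" by (rule inn_mu[OF b])
    show ?thesis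
    proof
      assume "gam top a \<in> K"
      hence "k \<in> K" using same[OF K _ ig ik] k1 by blast
      hence "m \<in> K" using same[OF K _ ik im] mk by blast
      thus "mu top b \<in> K" using same[OF K _ im imu] m1 by blast
    next
      assume "mu top b \<in> K"
      hence "m \<in> K" using same[OF K _ imu im] m1 by blast
      hence "k \<in> K" using same[OF K _ im ik] mk by blast
      thus "gam top a \<in> K" using same[OF K _ ik ig] k1 by blast
    qed
  qed
  have neA: "\<exists>a\<in>A. gam top a \<in> K" if K: "K \<in> KS" for K
  proof -
    have "inner M cle K \<noteq> {}" using blk K unfolding is_block_def by blast
    then obtain c where cK: "c \<in> K" and ic: "inn c" using inner_iff[OF KM[OF K]] by blast
    then obtain a where a: "a \<in> A" and ca: "snd c a \<noteq> bot" unfolding inn_def by blast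
    have c_in: "c \<in> M" using ic inn_in by blast
    define k where "k = gam (snd c a) a"
    have ck: "cle c k" unfolding k_def by (rule le_gam[OF c_in a order_refl])
    have "snd c a \<le> snd k a" unfolding k_def by (rule gam_snd[OF a])
    hence "snd k a \<noteq> bot" using ca by (auto simp: bot_unique)
    moreover obtain b where b: "b \<in> B" and "fst c b \<noteq> bot" using ic unfolding inn_def by blast
    hence "fst k b \<noteq> bot" using ck unfolding concept_le_def by (auto simp: bot_unique)
    ultimately have ik: "inn k" unfolding inn_def using gam_in a b k_def by blast
    have kK: "k \<in> K" using same[OF K cK ic ik] ck by blast
    have "cle (gam top a) k" unfolding k_def
      by (rule le_gam[OF gam_in a]) (simp add: gam_top_snd[OF a])
    hence "gam top a \<in> K" using same[OF K kK ik inn_gam[OF a]] by blast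
    thus ?thesis using a by blast
  qed
  have neB: "\<exists>b\<in>B. mu top b \<in> K" if K: "K \<in> KS" for K
  proof -
    have "inner M cle K \<noteq> {}" using blk K unfolding is_block_def by blast
    then obtain c where cK: "c \<in> K" and ic: "inn c" using inner_iff[OF KM[OF K]] by blast
    then obtain b where b: "b \<in> B" and cb: "fst c b \<noteq> bot" unfolding inn_def by blast
    have c_in: "c \<in> M" using ic inn_in by blast
    define m where "m = mu (fst c b) b"
    have mc: "cle m c" unfolding m_def by (rule mu_le[OF c_in b order_refl])
    have "fst c b \<le> fst m b" unfolding m_def by (rule mu_fst[OF b])
    hence "fst m b \<noteq> bot" using cb by (auto simp: bot_unique)
    moreover obtain a where a: "a \<in> A" and "snd c a \<noteq> bot" using ic unfolding inn_def by blast
    hence "snd m a \<noteq> bot" using mc le_iff[OF mu_in c_in] unfolding m_def by (auto simp: bot_unique)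
    ultimately have im: "inn m" unfolding inn_def using mu_in a b m_def by blast
    have mK: "m \<in> K" using same[OF K cK ic im] mc by blast
    have "cle m (mu top b)" unfolding m_def
      by (rule mu_le[OF mu_in b]) (simp add: mu_top_fst[OF b])
    hence "mu top b \<in> K" using same[OF K mK im inn_mu[OF b]] by blast
    thus ?thesis using b by blast
  qed
  have other: "\<exists>K'\<in>KS. K' \<noteq> K" if K: "K \<in> KS" for K
  proof -
    have "K \<subset> M" using blk K unfolding is_block_def by blast
    then obtain c where "c \<in> M" "c \<notin> K" by blast
    then obtain K' where "K' \<in> KS" "c \<in> K'" using un by blast
    thus ?thesis using \<open>c \<notin> K\<close> by blast
  qed
  define AK where "AK K = {a\<in>A. gam top a \<in> K}" for K
  define BK where "BK K = {b\<in>B. mu top b \<in> K}" for K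
  define P where "P = (\<lambda>K. (AK K, BK K)) ` KS"
  have KS_ne: "KS \<noteq> {}"
  proof -
    obtain a where "a \<in> A" using A_ne by blast
    hence "gam top a \<in> M" by (rule_tac gam_in)
    thus ?thesis using un by blast
  qed
  have cross: "R a b = bot \<and> \<not> has_zero_divisors (cj (\<sigma> a b))"
    if K: "K \<in> KS" and a: "a \<in> A" and b: "b \<in> B"
      and nx: "\<not> (gam top a \<in> K \<longleftrightarrow> mu top b \<in> K)" for K a b
  proof
    show "R a b = bot"
    proof (rule ccontr)
      assume "R a b \<noteq> bot"
      moreover have "cj (\<sigma> a b) (R a b) top \<le> R a b" using a b by simp
      ultimately show False using link[OF K a b _ top_ne_bot] nx by blast
    qed
    show "\<not> has_zero_divisors (cj (\<sigma> a b))"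
    proof
      assume "has_zero_divisors (cj (\<sigma> a b))"
      then obtain x y where "x \<noteq> bot" "y \<noteq> bot" "cj (\<sigma> a b) x y = bot"
        unfolding has_zero_divisors_def by blast
      thus False using link[OF K a b, of x y] nx by simp
    qed
  qed
  have sepK: "separable_subcontext A B R (AK K) (BK K)" if K: "K \<in> KS" for K
  proof -
    obtain K' where K': "K' \<in> KS" "K' \<noteq> K" using other[OF K] by blast
    obtain a' where a': "a' \<in> A" "gam top a' \<in> K'" using neA[OF K'(1)] by blast
    have "a' \<notin> AK K" using uniq[OF K'(1) K, of "gam top a'"] a' K'(2) inn_gam unfolding AK_def by blast
    hence s1: "AK K \<subset> A" using a' unfolding AK_def by blast
    obtain b' where b': "b' \<in> B" "mu top b' \<in> K'" using neB[OF K'(1)] by blast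
    have "b' \<notin> BK K" using uniq[OF K'(1) K, of "mu top b'"] b' K'(2) inn_mu unfolding BK_def by blast
    hence s2: "BK K \<subset> B" using b' unfolding BK_def by blast
    obtain a where a: "a \<in> A" "gam top a \<in> K" using neA[OF K] by blast
    obtain b where b: "b \<in> B" and Rab: "R a b \<noteq> bot" using normalized a(1) unfolding normalized_context_def by blast
    have "mu top b \<in> K" using cross[OF K a(1) b] Rab a(2) by blast
    hence s3: "\<exists>a\<in>AK K. \<exists>b\<in>BK K. R a b \<noteq> bot" using a b Rab unfolding AK_def BK_def by blast
    have s4: "\<forall>a\<in>AK K. \<forall>b\<in>B - BK K. R a b = bot"
      using cross[OF K] unfolding AK_def BK_def by blast
    have s5: "\<forall>a\<in>A - AK K. \<forall>b\<in>BK K. R a b = bot"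
      using cross[OF K] unfolding AK_def BK_def by blast
    have "AK K \<noteq> {}" "BK K \<noteq> {}" using s3 by auto
    thus ?thesis unfolding separable_subcontext_def using s1 s2 s3 s4 s5 by blast
  qed
  have disj: "AK K1 \<inter> AK K2 = {} \<and> BK K1 \<inter> BK K2 = {}" if "K1 \<in> KS" "K2 \<in> KS" "K1 \<noteq> K2" for K1 K2
    using uniq[OF that(1,2)] that(3) inn_gam inn_mu unfolding AK_def BK_def by blast
  have UA: "(\<Union>p\<in>P. fst p) = A"
  proof
    show "(\<Union>p\<in>P. fst p) \<subseteq> A" unfolding P_def AK_def by auto
    show "A \<subseteq> (\<Union>p\<in>P. fst p)"
    proof
      fix a assume a: "a \<in> A"
      then obtain K where "K \<in> KS" "gam top a \<in> K" using exK[OF inn_gam[OF a]] by blast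
      thus "a \<in> (\<Union>p\<in>P. fst p)" unfolding P_def AK_def using a by force
    qed
  qed
  have UB: "(\<Union>p\<in>P. snd p) = B"
  proof
    show "(\<Union>p\<in>P. snd p) \<subseteq> B" unfolding P_def BK_def by auto
    show "B \<subseteq> (\<Union>p\<in>P. snd p)"
    proof
      fix b assume b: "b \<in> B"
      then obtain K where "K \<in> KS" "mu top b \<in> K" using exK[OF inn_mu[OF b]] by blast
      thus "b \<in> (\<Union>p\<in>P. snd p)" unfolding P_def BK_def using b by force
    qed
  qed
  have zd: "\<not> has_zero_divisors (cj (\<sigma> a b))"
    if p: "(Y, X) \<in> P" and q: "(a, b) \<in> ((A - Y) \<times> X) \<union> (Y \<times> (B - X))" for Y X a b
  proof -
    obtain K where K: "K \<in> KS" and pK: "(Y, X) = (AK K, BK K)" using p unfolding P_def by blast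
    have "a \<in> A" "b \<in> B" "\<not> (gam top a \<in> K \<longleftrightarrow> mu top b \<in> K)"
      using q pK unfolding AK_def BK_def by auto
    thus ?thesis using cross[OF K] by blast
  qed
  show ?thesis unfolding has_subcontext_decomposition_def
  proof (intro exI[of _ P] conjI)
    show "P \<noteq> {}" using KS_ne unfolding P_def by blast
    show "\<forall>(Y, X)\<in>P. separable_subcontext A B R Y X" proof (intro ballI)
      fix p assume "p \<in> P"
      then obtain K where "K \<in> KS" "p = (AK K, BK K)" unfolding P_def by blast
      thus "case p of (Y, X) \<Rightarrow> separable_subcontext A B R Y X" using sepK by simp
    qed
    show "\<forall>p\<in>P. \<forall>q\<in>P. p \<noteq> q \<longrightarrow> fst p \<inter> fst q = {} \<and> snd p \<inter> snd q = {}"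
      proof (intro ballI impI)
      fix p q assume "p \<in> P" "q \<in> P" "p \<noteq> q"
      then obtain K1 K2 where "K1 \<in> KS" "K2 \<in> KS" "p = (AK K1, BK K1)" "q = (AK K2, BK K2)"
        unfolding P_def by blast
      moreover have "K1 \<noteq> K2" using calculation \<open>p \<noteq> q\<close> by blast
      ultimately show "fst p \<inter> fst q = {} \<and> snd p \<inter> snd q = {}" using disj by simp
    qed
    show "(\<Union>p\<in>P. fst p) = A" by (rule UA)
    show "(\<Union>p\<in>P. snd p) = B" by (rule UB)
    show "\<forall>(Y, X)\<in>P. \<forall>(a, b) \<in> ((A - Y) \<times> X) \<union> (Y \<times> (B - X)). \<not> has_zero_divisors (cj (\<sigma> a b))"
    proof (intro ballI)
      fix p assume p: "p \<in> P"
      show "case p of (Y, X) \<Rightarrow> \<forall>(a, b) \<in> ((A - Y) \<times> X) \<union> (Y \<times> (B - X)). \<not> has_zero_divisors (cj (\<sigma> a b))"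
      proof (cases p)
        case (Pair Y X)
        show ?thesis unfolding Pair split
        proof (intro ballI)
          fix q assume "q \<in> ((A - Y) \<times> X) \<union> (Y \<times> (B - X))"
          thus "case q of (a, b) \<Rightarrow> \<not> has_zero_divisors (cj (\<sigma> a b))"
            using zd[of Y X] p Pair by (cases q) simp
        qed
      qed
    qed
  qed
qed


section \<open>From subcontext decomposition to block decomposition\<close>

lemma dir1:
  assumes "has_subcontext_decomposition A B R \<sigma> cj"
  shows "has_block_decomposition M cle"
proof -
  obtain P :: "('a set \<times> 'b set) set" where P_ne: "P \<noteq> {}"
    and sep0: "\<forall>(Y, X)\<in>P. separable_subcontext A B R Y X"
    and disj: "\<forall>p\<in>P. \<forall>q\<in>P. p \<noteq> q \<longrightarrow> fst p \<inter> fst q = {} \<and> snd p \<inter> snd q = {}"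
    and UA: "(\<Union>p\<in>P. fst p) = A" and UB: "(\<Union>p\<in>P. snd p) = B"
    and nz0: "\<forall>(Y, X)\<in>P. \<forall>(a, b) \<in> ((A - Y) \<times> X) \<union> (Y \<times> (B - X)).
            \<not> has_zero_divisors (cj (\<sigma> a b))"
    using assms unfolding has_subcontext_decomposition_def by blast
  have sep: "separable_subcontext A B R (fst p) (snd p)" if "p \<in> P" for p
    using bspec[OF sep0 that] by (cases p) simp
  have nz: "\<not> has_zero_divisors (cj (\<sigma> a b))"
    if "p \<in> P" "(a, b) \<in> ((A - fst p) \<times> snd p) \<union> (fst p \<times> (B - snd p))" for p a b
  proof -
    have "\<forall>(a, b) \<in> ((A - fst p) \<times> snd p) \<union> (fst p \<times> (B - snd p)). \<not> has_zero_divisors (cj (\<sigma> a b))"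
      using bspec[OF nz0 that(1)] by (cases p) simp
    from bspec[OF this that(2)] show ?thesis by simp
  qed
  have YA: "fst p \<subset> A" and XB: "snd p \<subset> B" if "p \<in> P" for p
    using sep[OF that] unfolding separable_subcontext_def by blast+
  have Z1: "snd c a = bot"
    if p: "p \<in> P" and c: "c \<in> M" and a: "a \<in> A" "a \<notin> fst p" and b: "b \<in> snd p" and cb: "fst c b \<noteq> bot" for p c a b
  proof -
    have bB: "b \<in> B" using XB[OF p] b by blast
    have Rab: "R a b = bot" using sep[OF p] a b unfolding separable_subcontext_def by blast
    have "cj (\<sigma> a b) (snd c a) (fst c b) \<le> R a b" using M_rel[OF c] a bB unfolding rel_def by blast
    hence "cj (\<sigma> a b) (snd c a) (fst c b) = bot" using Rab by (simp add: bot_unique)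
    moreover have "\<not> has_zero_divisors (cj (\<sigma> a b))" using nz[OF p, of a b] a b by blast
    ultimately show ?thesis using cb unfolding has_zero_divisors_def by blast
  qed
  have Z2: "fst c b = bot"
    if p: "p \<in> P" and c: "c \<in> M" and a: "a \<in> fst p" and b: "b \<in> B" "b \<notin> snd p" and ca: "snd c a \<noteq> bot" for p c a b
  proof -
    have aA: "a \<in> A" using YA[OF p] a by blast
    have Rab: "R a b = bot" using sep[OF p] a b unfolding separable_subcontext_def by blast
    have "cj (\<sigma> a b) (snd c a) (fst c b) \<le> R a b" using M_rel[OF c] aA b unfolding rel_def by blast
    hence "cj (\<sigma> a b) (snd c a) (fst c b) = bot" using Rab by (simp add: bot_unique)
    moreover have "\<not> has_zero_divisors (cj (\<sigma> a b))" using nz[OF p, of a b] a b by blast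
    ultimately show ?thesis using ca unfolding has_zero_divisors_def by blast
  qed
  define gs where "gs p c \<longleftrightarrow> (\<forall>b\<in>B - snd p. fst c b = bot)" for p :: "'a set \<times> 'b set" and c :: "('b \<Rightarrow> 'l) \<times> ('a \<Rightarrow> 'l)"
  define fs where "fs p c \<longleftrightarrow> (\<forall>a\<in>A - fst p. snd c a = bot)" for p :: "'a set \<times> 'b set" and c :: "('b \<Rightarrow> 'l) \<times> ('a \<Rightarrow> 'l)"
  define KK where "KK p = {c\<in>M. gs p c} \<union> {c\<in>M. fs p c}" for p :: "'a set \<times> 'b set"
  have C1: "fs p c" if p: "p \<in> P" and c: "c \<in> M" and b: "b \<in> snd p" "fst c b \<noteq> bot" for p c b
    unfolding fs_def using Z1[OF p c _ _ b] by blast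
  have C2: "gs p c" if p: "p \<in> P" and c: "c \<in> M" and a: "a \<in> fst p" "snd c a \<noteq> bot" for p c a
    unfolding gs_def using Z2[OF p c a(1) _ _ a(2)] by blast
  have nl: "fs p c" if p: "p \<in> P" and c: "c \<in> KK p" and b: "b \<in> B" "fst c b \<noteq> bot" for p c b
  proof -
    have cM: "c \<in> M" using c unfolding KK_def by blast
    show ?thesis
    proof (cases "fs p c")
      case False
      hence "gs p c" using c unfolding KK_def by blast
      hence "b \<in> snd p" using b unfolding gs_def by blast
      thus ?thesis using C1[OF p cM _ b(2)] by blast
    qed
  qed
  have ng: "gs p c" if p: "p \<in> P" and c: "c \<in> KK p" and a: "a \<in> A" "snd c a \<noteq> bot" for p c a
  proof -
    have cM: "c \<in> M" using c unfolding KK_def by blast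
    show ?thesis
    proof (cases "gs p c")
      case False
      hence "fs p c" using c unfolding KK_def by blast
      hence "a \<in> fst p" using a unfolding fs_def by blast
      thus ?thesis using C2[OF p cM _ a(2)] by blast
    qed
  qed
  have gam_KK: "gam top a \<in> KK p \<and> inn (gam top a)"
    if p: "p \<in> P" and a: "a \<in> fst p" and b: "b \<in> snd p" and Rab: "R a b \<noteq> bot" for p a b
  proof -
    have aA: "a \<in> A" using YA[OF p] a by blast
    have bB: "b \<in> B" using XB[OF p] b by blast
    have "fst (gam top a) b \<noteq> bot" using gam_top_fst[OF aA bB] Rab by (auto simp: bot_unique)
    hence "fs p (gam top a)" using C1[OF p gam_in b] by blast
    thus ?thesis using gam_in inn_gam[OF aA] unfolding KK_def by blast
  qed
  have KKM: "KK p \<subseteq> M" for p unfolding KK_def by blast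
  have block: "is_block M cle (KK p)" if p: "p \<in> P" for p
  proof -
    obtain a0 b0 where a0: "a0 \<in> fst p" and b0: "b0 \<in> snd p" and R0: "R a0 b0 \<noteq> bot"
      using sep[OF p] unfolding separable_subcontext_def by blast
    have g0: "gam top a0 \<in> KK p" "inn (gam top a0)" using gam_KK[OF p a0 b0 R0] by blast+
    have inner_ne: "inner M cle (KK p) \<noteq> {}" using g0 inner_iff[OF KKM] by blast
    have join: "s \<in> KK p" if x: "x \<in> KK p" and y: "y \<in> KK p" and s: "is_join_in M cle x y s" for x y s
    proof -
      have sM: "s \<in> M" and xs: "cle x s" and ys: "cle y s" and lub: "\<forall>u\<in>M. cle x u \<and> cle y u \<longrightarrow> cle s u"
        using s unfolding is_join_in_def by blast+
      have xM: "x \<in> M" and yM: "y \<in> M" using x y KKM by blast+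
      show ?thesis
      proof (cases "\<exists>b\<in>B. fst x b \<noteq> bot \<or> fst y b \<noteq> bot")
        case True
        then obtain b where b: "b \<in> B" and "fst x b \<noteq> bot \<or> fst y b \<noteq> bot" by blast
        hence "fs p x \<or> fs p y" using nl[OF p x b] nl[OF p y b] by blast
        moreover have "\<forall>a\<in>A. snd s a \<le> snd x a" "\<forall>a\<in>A. snd s a \<le> snd y a"
          using le_iff[OF xM sM] le_iff[OF yM sM] xs ys by blast+
        ultimately have "fs p s" unfolding fs_def by (auto simp: bot_unique)
        thus ?thesis using sM unfolding KK_def by blast
      next
        case False
        hence "cle y x" unfolding concept_le_def by simp
        hence "cle s x" using lub xM by (simp add: concept_le_def)
        hence "gs p s" using False unfolding gs_def concept_le_def by (auto simp: bot_unique)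
        thus ?thesis using sM unfolding KK_def by blast
      qed
    qed
    have meet: "s \<in> KK p" if x: "x \<in> KK p" and y: "y \<in> KK p" and s: "is_meet_in M cle x y s" for x y s
    proof -
      have sM: "s \<in> M" and xs: "cle s x" and ys: "cle s y" and glb: "\<forall>u\<in>M. cle u x \<and> cle u y \<longrightarrow> cle u s"
        using s unfolding is_meet_in_def by blast+
      have xM: "x \<in> M" and yM: "y \<in> M" using x y KKM by blast+
      show ?thesis
      proof (cases "\<exists>a\<in>A. snd x a \<noteq> bot \<or> snd y a \<noteq> bot")
        case True
        then obtain a where a: "a \<in> A" and "snd x a \<noteq> bot \<or> snd y a \<noteq> bot" by blast
        hence "gs p x \<or> gs p y" using ng[OF p x a] ng[OF p y a] by blast
        thus "s \<in> KK p" using xs ys sM unfolding gs_def concept_le_def KK_def by (auto simp: bot_unique)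
      next
        case False
        hence "cle x y" using le_iff[OF xM yM] by simp
        hence "cle x s" using glb xM by (simp add: concept_le_def)
        hence "\<forall>a\<in>A. snd s a \<le> snd x a" using le_iff[OF xM sM] by blast
        hence "fs p s" using False unfolding fs_def by (auto simp: bot_unique)
        thus ?thesis using sM unfolding KK_def by blast
      qed
    qed
    have strict: "KK p \<subset> M"
    proof -
      obtain a1 where a1: "a1 \<in> A" "a1 \<notin> fst p" using YA[OF p] by blast
      then obtain q where q: "q \<in> P" "a1 \<in> fst q" using UA by blast
      have pq: "p \<noteq> q" using a1 q by blast
      obtain a' b' where a': "a' \<in> fst q" and b': "b' \<in> snd q" and R': "R a' b' \<noteq> bot"
        using sep[OF q(1)] unfolding separable_subcontext_def by blast
      have a'A: "a' \<in> A" using YA[OF q(1)] a' by blast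
      have b'B: "b' \<in> B" using XB[OF q(1)] b' by blast
      have "a' \<notin> fst p" "b' \<notin> snd p" using disj p q(1) pq a' b' by blast+
      moreover have "fst (gam top a') b' \<noteq> bot" using gam_top_fst[OF a'A b'B] R' by (auto simp: bot_unique)
      moreover have "snd (gam top a') a' \<noteq> bot" using gam_top_snd[OF a'A] top_ne_bot by simp
      ultimately have "gam top a' \<notin> KK p" using a'A b'B unfolding KK_def gs_def fs_def by blast
      thus ?thesis using KKM gam_in by blast
    qed
    have clos: "\<forall>k\<in>inner M cle (KK p). inner M cle ({x\<in>M. cle k x} \<union> {x\<in>M. cle x k}) \<subseteq> KK p"
    proof (intro ballI subsetI)
      fix k x assume k: "k \<in> inner M cle (KK p)" and x: "x \<in> inner M cle ({x\<in>M. cle k x} \<union> {x\<in>M. cle x k})"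
      have kK: "k \<in> KK p" and ik: "inn k" using k inner_iff[OF KKM] by blast+
      have xM: "x \<in> M" and cmp: "cle k x \<or> cle x k" using x unfolding inner_def by blast+
      have kM: "k \<in> M" using ik inn_in by blast
      obtain a where a: "a \<in> A" "snd k a \<noteq> bot" using ik unfolding inn_def by blast
      obtain b where b: "b \<in> B" "fst k b \<noteq> bot" using ik unfolding inn_def by blast
      have fk: "fs p k" using nl[OF p kK b] by blast
      have gk: "gs p k" using ng[OF p kK a] by blast
      from cmp show "x \<in> KK p"
      proof
        assume "cle k x"
        hence "\<forall>a\<in>A. snd x a \<le> snd k a" using le_iff[OF kM xM] by blast
        hence "fs p x" using fk unfolding fs_def by (auto simp: bot_unique)
        thus ?thesis using xM unfolding KK_def by blast
      next
        assume "cle x k"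
        hence "gs p x" using gk unfolding gs_def concept_le_def by (auto simp: bot_unique)
        thus ?thesis using xM unfolding KK_def by blast
      qed
    qed
    have "sublattice_of M cle (KK p)"
      unfolding sublattice_of_def using KKM g0(1) join meet by blast
    thus ?thesis unfolding is_block_def using strict inner_ne clos by blast
  qed
  have indep: "independent_blocks M cle (KK p) (KK q)" if p: "p \<in> P" and q: "q \<in> P" and ne: "KK p \<noteq> KK q" for p q
  proof -
    have pq: "p \<noteq> q" using ne by blast
    have "c \<notin> inner M cle (KK p \<inter> KK q)" for c
    proof
      assume "c \<in> inner M cle (KK p \<inter> KK q)"
      hence cp: "c \<in> KK p" and cq: "c \<in> KK q" and ic: "inn c" using inner_iff[of "KK p \<inter> KK q" c] KKM by blast+
      obtain a where a: "a \<in> A" "snd c a \<noteq> bot" using ic unfolding inn_def by blast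
      obtain b where b: "b \<in> B" "fst c b \<noteq> bot" using ic unfolding inn_def by blast
      have "gs p c" "gs q c" using ng[OF p cp a] ng[OF q cq a] by blast+
      hence "b \<in> snd p" "b \<in> snd q" using b unfolding gs_def by blast+
      thus False using disj p q pq by blast
    qed
    thus ?thesis unfolding independent_blocks_def by blast
  qed
  have union: "\<Union>(KK ` P) = M"
  proof
    show "\<Union>(KK ` P) \<subseteq> M" using KKM by blast
    show "M \<subseteq> \<Union>(KK ` P)"
    proof
      fix c assume c: "c \<in> M"
      show "c \<in> \<Union>(KK ` P)"
      proof (cases "\<exists>b\<in>B. fst c b \<noteq> bot")
        case True
        then obtain b where b: "b \<in> B" "fst c b \<noteq> bot" by blast
        then obtain p where p: "p \<in> P" "b \<in> snd p" using UB by blast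
        have "fs p c" using C1[OF p(1) c p(2) b(2)] .
        thus ?thesis using p c unfolding KK_def by blast
      next
        case False
        obtain p where p: "p \<in> P" using P_ne by blast
        have "gs p c" using False unfolding gs_def by blast
        thus ?thesis using p c unfolding KK_def by blast
      qed
    qed
  qed
  show ?thesis unfolding has_block_decomposition_def
  proof (intro exI[of _ "KK ` P"] conjI)
    show "\<forall>K\<in>KK ` P. is_block M cle K" using block by blast
    show "\<forall>K1\<in>KK ` P. \<forall>K2\<in>KK ` P. K1 \<noteq> K2 \<longrightarrow> independent_blocks M cle K1 K2"
      using indep by blast
    show "\<Union>(KK ` P) = M" by (rule union)
  qed
qed

end

theorem corollary37:
  fixes n :: nat
    and cj ld rd :: "nat \<Rightarrow> 'l::complete_lattice \<Rightarrow> 'l \<Rightarrow> 'l"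
    and A :: "'a set" and B :: "'b set"
    and R :: "'a \<Rightarrow> 'b \<Rightarrow> 'l" and \<sigma> :: "'a \<Rightarrow> 'b \<Rightarrow> nat"
  assumes triples: "\<forall>i\<in>{1..n}. adjoint_triple (cj i) (ld i) (rd i)"
    and units: "\<forall>i\<in>{1..n}. \<forall>x. cj i x top = x \<and> cj i top x = x"
    and A_ne: "A \<noteq> {}" and B_ne: "B \<noteq> {}"
    and sigma_range: "\<forall>a\<in>A. \<forall>b\<in>B. \<sigma> a b \<in> {1..n}"
    and normalized: "normalized_context A B R"
    and acc: "acc_condition (concepts A B R \<sigma> ld rd) (concept_le B)"
  shows "has_subcontext_decomposition A B R \<sigma> cj \<longleftrightarrow>
         has_block_decomposition (concepts A B R \<sigma> ld rd) (concept_le B)"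
proof -
  interpret ctx n cj ld rd A B R \<sigma>
    using assms by unfold_locales blast+
  show ?thesis using dir1 dir2 by blast
qed

end
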